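(* Let $w$ be a metric on a finite set $V$, let $T$ be a minimum spanning tree of $G_w$, and let $\mathcal{T}$ be a collection of pairwise edge-disjoint subtrees of $T$. Then $$\mathsf{TSP}(w)\le 2\cdot \mathsf{MST}(w)-\frac12\sum_{T'\in\mathcal{T}}\mathsf{adv}(T').$$
   Context: $V$ is a finite set with $|V|=n\ge 3$ and $w$ a metric on $V$. $G_w$ is the complete graph on $V$ where the edge (pair) $(u,v)$ has weight $w(u,v)$; for a set (or multiset) $E'$ of pairs, $w(E')=\sum_{e\in E'}w(e)$, and for a subgraph $H$, $w(H)=w(E(H))$. $\mathsf{MST}(w)$ is the weight of a minimum spanning tree of $G_w$ and $\mathsf{TSP}(w)$ is the minimum weight of a Hamiltonian cycle of $G_w$. Fix a minimum spanning tree $T$ of $G_w$. For a pair $e=(u,v)$ of distinct vertices, $P^T_e$ denotes the unique $u$–$v$ path in $T$. An edge $f\in E(T)$ is covered by a pair $e$ iff $f\in E(P^T_e)$ (in particular an edge of $T$ covers exactly itself); $\mathsf{cov}(e)$ is the set of edges of $T$ covered by $e$, and $\mathsf{cov}(E')=\bigcup_{e\in E'}\mathsf{cov}(e)$. For a subtree $T'$ of $T$, $\mathsf{cov}(E',T')=\mathsf{cov}(E')\cap E(T')$, and the cover advantage of $E'$ on $T'$ is $\mathsf{adv}(E',T')=w(\mathsf{cov}(E',T'))-w(E')$. The optimal cover advantage $\mathsf{adv}(T')$ is the maximum of $\mathsf{adv}(E',T')$ over all sets $E'$ of pairs each having at least one endpoint in $V(T')$. *)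

theory Defs
  imports Complex_Main
begin

definition is_metric :: "'a set \<Rightarrow> ('a \<Rightarrow> 'a \<Rightarrow> real) \<Rightarrow> bool" where
  "is_metric V w \<longleftrightarrow>
     (\<forall>u\<in>V. w u u = 0) \<and>
     (\<forall>u\<in>V. \<forall>v\<in>V. u \<noteq> v \<longrightarrow> w u v > 0) \<and>
     (\<forall>u\<in>V. \<forall>v\<in>V. w u v = w v u) \<and>
     (\<forall>u\<in>V. \<forall>v\<in>V. \<forall>x\<in>V. w u x \<le> w u v + w v x)"

definition pairs :: "'a set \<Rightarrow> 'a set set" where
  "pairs V = {{u, v} | u v. u \<in> V \<and> v \<in> V \<and> u \<noteq> v}"

definition ew :: "('a \<Rightarrow> 'a \<Rightarrow> real) \<Rightarrow> 'a set \<Rightarrow> real" where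
  "ew w e = (THE c. \<exists>u v. e = {u, v} \<and> c = w u v)"

definition wt :: "('a \<Rightarrow> 'a \<Rightarrow> real) \<Rightarrow> 'a set set \<Rightarrow> real" where
  "wt w F = (\<Sum>e\<in>F. ew w e)"

definition path_edges :: "'a list \<Rightarrow> 'a set set" where
  "path_edges xs = {{xs ! i, xs ! (i + 1)} | i. i + 1 < length xs}"

definition is_path :: "'a set set \<Rightarrow> 'a \<Rightarrow> 'a \<Rightarrow> 'a list \<Rightarrow> bool" where
  "is_path F u v xs \<longleftrightarrow> xs \<noteq> [] \<and> hd xs = u \<and> last xs = v \<and> distinct xs \<and>
     (\<forall>i. i + 1 < length xs \<longrightarrow> {xs ! i, xs ! (i + 1)} \<in> F)"

text \<open>A cycle: closed walk x0 x1 ... xk = x0 with k >= 3 and x1..xk distinct.\<close>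
definition is_cycle :: "'a set set \<Rightarrow> 'a list \<Rightarrow> bool" where
  "is_cycle F xs \<longleftrightarrow> length xs \<ge> 4 \<and> hd xs = last xs \<and> distinct (tl xs) \<and>
     (\<forall>i. i + 1 < length xs \<longrightarrow> {xs ! i, xs ! (i + 1)} \<in> F)"

definition is_tree :: "'a set \<Rightarrow> 'a set set \<Rightarrow> bool" where
  "is_tree VS ES \<longleftrightarrow> VS \<noteq> {} \<and> ES \<subseteq> pairs VS \<and>
     (\<forall>u\<in>VS. \<forall>v\<in>VS. \<exists>xs. is_path ES u v xs) \<and>
     \<not> (\<exists>xs. is_cycle ES xs)"

definition spanning_tree :: "'a set \<Rightarrow> 'a set set \<Rightarrow> bool" where
  "spanning_tree V F \<longleftrightarrow> is_tree V F"

definition MST :: "'a set \<Rightarrow> ('a \<Rightarrow> 'a \<Rightarrow> real) \<Rightarrow> real" where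
  "MST V w = Min {wt w F | F. spanning_tree V F}"

definition is_mst :: "'a set \<Rightarrow> ('a \<Rightarrow> 'a \<Rightarrow> real) \<Rightarrow> 'a set set \<Rightarrow> bool" where
  "is_mst V w T \<longleftrightarrow> spanning_tree V T \<and> wt w T = MST V w"

definition ham_cycle :: "'a set \<Rightarrow> 'a set set \<Rightarrow> bool" where
  "ham_cycle V H \<longleftrightarrow> (\<exists>xs. distinct xs \<and> set xs = V \<and>
      H = {{xs ! i, xs ! ((i + 1) mod length xs)} | i. i < length xs})"

definition TSP :: "'a set \<Rightarrow> ('a \<Rightarrow> 'a \<Rightarrow> real) \<Rightarrow> real" where
  "TSP V w = Min {wt w H | H. ham_cycle V H}"

definition is_subtree :: "'a set \<Rightarrow> 'a set set \<Rightarrow> 'a set \<times> 'a set set \<Rightarrow> bool" where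
  "is_subtree V T S \<longleftrightarrow> fst S \<subseteq> V \<and> snd S \<subseteq> T \<and> is_tree (fst S) (snd S)"

text \<open>Edges of T covered by the pair e: the edges of the (unique) T-path between its endpoints.\<close>
definition cov :: "'a set set \<Rightarrow> 'a set \<Rightarrow> 'a set set" where
  "cov T e = \<Union> {path_edges xs | xs u v. e = {u, v} \<and> is_path T u v xs}"

definition covs :: "'a set set \<Rightarrow> 'a set set \<Rightarrow> 'a set set" where
  "covs T E' = (\<Union>e\<in>E'. cov T e)"

definition adv :: "('a \<Rightarrow> 'a \<Rightarrow> real) \<Rightarrow> 'a set set \<Rightarrow> 'a set set \<Rightarrow> 'a set \<times> 'a set set \<Rightarrow> real" where
  "adv w T E' S = wt w (covs T E' \<inter> snd S) - wt w E'"

definition opt_adv :: "'a set \<Rightarrow> ('a \<Rightarrow> 'a \<Rightarrow> real) \<Rightarrow> 'a set set \<Rightarrow> 'a set \<times> 'a set set \<Rightarrow> real" where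
  "opt_adv V w T S = Max {adv w T E' S | E'. E' \<subseteq> pairs V \<and> (\<forall>e\<in>E'. e \<inter> fst S \<noteq> {})}"

end

theory Submission
  imports Defs "HOL-Library.Multiset"
begin


definition ec :: "'a list \<Rightarrow> 'a set multiset" where
  "ec xs = mset (map (\<lambda>(a,b). {a,b}) (zip xs (rotate1 xs)))"

lemma ec_rotate1: "ec (rotate1 xs) = ec xs"
proof (cases xs)
  case Nil then show ?thesis by simp
next
  case (Cons x ys)
  show ?thesis
  proof (cases ys)
    case Nil then show ?thesis using Cons by simp
  next
    case (Cons y zs)
    have "zip (y # zs @ [x]) (zs @ [x] @ [y]) = zip (y#zs) (zs @ [x]) @ [(x,y)]"
      using zip_append[of "y#zs" "zs@[x]" "[x]" "[y]"] by simp
    moreover have "zip (x # y # zs) (y # zs @ [x]) = (x,y) # zip (y#zs) (zs @ [x])" by simp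
    ultimately show ?thesis using Cons \<open>xs = x # ys\<close> by (simp add: ec_def)
  qed
qed

lemma ec_rotate: "ec (rotate k xs) = ec xs"
  by (induction k) (simp_all add: ec_rotate1 rotate_def)

lemma ec_append_hd: 
  assumes "xs \<noteq> []" "ys \<noteq> []" "hd xs = hd ys"
  shows "ec (xs @ ys) = ec xs + ec ys"
proof -
  obtain v a where xs: "xs = v # a" using assms by (cases xs) auto
  obtain b where ys: "ys = v # b" using assms xs by (cases ys) auto
  have "zip (v # a @ v # b) (a @ v # b @ [v]) = zip (v#a) (a@[v]) @ zip (v#b) (b@[v])"
    using zip_append[of "v#a" "a@[v]" "v#b" "b@[v]"] by simp
  then show ?thesis by (simp add: ec_def xs ys)
qed

lemma zip_snoc_last: "length xs = Suc (length ys) \<Longrightarrow> zip xs (ys @ [a]) = zip (butlast xs) ys @ [(last xs, a)]"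
proof (induction ys arbitrary: xs)
  case Nil then show ?case by (cases xs) auto
next
  case (Cons y ys) then show ?case by (cases xs) auto
qed

lemma ec_snoc:
  assumes "xs \<noteq> []"
  shows "ec (xs @ [x]) + {#{last xs, hd xs}#} = ec xs + {#{last xs, x}#} + {#{x, hd xs}#}"
proof -
  obtain c cs where xs: "xs = c # cs" using assms by (cases xs) auto
  have 1: "zip (c # cs @ [x]) (cs @ [x] @ [c]) = zip (c#cs) (cs @ [x]) @ [(x,c)]"
    using zip_append[of "c#cs" "cs@[x]" "[x]" "[c]"] by simp
  have 2: "zip (c#cs) (cs @ [x]) = zip (butlast (c#cs)) cs @ [(last (c#cs), x)]"
    by (rule zip_snoc_last) simp
  have 3: "zip (c#cs) (cs @ [c]) = zip (butlast (c#cs)) cs @ [(last (c#cs), c)]"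
    by (rule zip_snoc_last) simp
  show ?thesis unfolding ec_def xs using 1 2 3 by (simp add: insert_commute)
qed

lemma ec_last_hd: "xs \<noteq> [] \<Longrightarrow> {last xs, hd xs} \<in># ec xs"
proof -
  assume "xs \<noteq> []"
  then obtain c cs where xs: "xs = c # cs" by (cases xs) auto
  have "zip (c#cs) (cs @ [c]) = zip (butlast (c#cs)) cs @ [(last (c#cs), c)]"
    by (rule zip_snoc_last) simp
  then show ?thesis unfolding ec_def xs by simp
qed

lemma size_ec: "size (ec xs) = length xs"
  by (simp add: ec_def)

lemma ec_nth: "e \<in># ec xs \<longleftrightarrow> (\<exists>i<length xs. e = {xs ! i, xs ! (Suc i mod length xs)})"
proof
  assume "e \<in># ec xs"
  then have "e \<in> set (map (\<lambda>(a,b). {a,b}) (zip xs (rotate1 xs)))" by (simp add: ec_def)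
  then obtain i where i: "i < length xs" "e = (\<lambda>(a,b). {a,b}) (zip xs (rotate1 xs) ! i)"
    by (auto simp: in_set_conv_nth)
  then have "e = {xs ! i, rotate1 xs ! i}" by simp
  then show "\<exists>i<length xs. e = {xs ! i, xs ! (Suc i mod length xs)}" using i by (auto simp: nth_rotate1)
next
  assume "\<exists>i<length xs. e = {xs ! i, xs ! (Suc i mod length xs)}"
  then obtain i where i: "i < length xs" "e = {xs ! i, xs ! (Suc i mod length xs)}" by blast
  then have "map (\<lambda>(a,b). {a,b}) (zip xs (rotate1 xs)) ! i = e" by (simp add: nth_rotate1)
  then have "e \<in> set (map (\<lambda>(a,b). {a,b}) (zip xs (rotate1 xs)))"
    using i nth_mem[of i "map (\<lambda>(a,b). {a,b}) (zip xs (rotate1 xs))"] by simp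
  then show "e \<in># ec xs" by (simp add: ec_def)
qed

lemma ec_subset_set: "e \<in># ec xs \<Longrightarrow> e \<subseteq> set xs"
proof -
  assume "e \<in># ec xs"
  then obtain i where i: "i < length xs" "e = {xs ! i, xs ! (Suc i mod length xs)}" unfolding ec_nth by blast
  have "0 < length xs" using i(1) by (cases xs) auto
  then have "Suc i mod length xs < length xs" by simp
  then have "xs ! (Suc i mod length xs) \<in> set xs" by (rule nth_mem)
  moreover have "xs ! i \<in> set xs" using i(1) by (rule nth_mem)
  ultimately show ?thesis using i(2) by simp
qed

lemma set_sub_ec: "x \<in> set xs \<Longrightarrow> \<exists>e. e \<in># ec xs \<and> x \<in> e"
proof -
  assume "x \<in> set xs"
  then obtain i where i: "i < length xs" "xs ! i = x" by (auto simp: in_set_conv_nth)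
  have "\<exists>j<length xs. {xs ! i, xs ! (Suc i mod length xs)} = {xs ! j, xs ! (Suc j mod length xs)}"
    by (rule exI[of _ i]) (simp add: i(1))
  then have "{xs ! i, xs ! (Suc i mod length xs)} \<in># ec xs" unfolding ec_nth .
  then show ?thesis using i(2) by (intro exI[of _ "{xs ! i, xs ! (Suc i mod length xs)}"]) simp
qed

lemma ec_rotate_to_edge:
  assumes "e \<in># ec xs"
  shows "\<exists>k. e = {last (rotate k xs), hd (rotate k xs)}"
proof -
  obtain i where i: "i < length xs" "e = {xs ! i, xs ! (Suc i mod length xs)}" using assms unfolding ec_nth by blast
  let ?n = "length xs"
  have ne: "xs \<noteq> []" using i by auto
  have "hd (rotate (Suc i) xs) = rotate (Suc i) xs ! 0" using ne by (simp add: hd_conv_nth)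
  also have "\<dots> = xs ! ((Suc i + 0) mod ?n)" using ne by (intro nth_rotate) simp
  finally have h: "hd (rotate (Suc i) xs) = xs ! (Suc i mod ?n)" by simp
  have "last (rotate (Suc i) xs) = rotate (Suc i) xs ! (?n - 1)" using ne by (simp add: last_conv_nth)
  also have "\<dots> = xs ! ((Suc i + (?n - 1)) mod ?n)" using ne by (intro nth_rotate) simp
  also have "(Suc i + (?n - 1)) mod ?n = i"
  proof -
    have "Suc i + (?n - 1) = i + ?n" using ne by (cases xs) auto
    then show ?thesis using i(1) by simp
  qed
  finally have l: "last (rotate (Suc i) xs) = xs ! i" .
  show ?thesis using h l i by (intro exI[of _ "Suc i"]) auto
qed

lemma rotate_to_hd:
  assumes "v \<in> set xs"
  shows "\<exists>k. hd (rotate k xs) = v"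
proof -
  obtain i where i: "i < length xs" "xs ! i = v" using assms by (auto simp: in_set_conv_nth)
  have "rotate i xs \<noteq> []" using i by auto
  then have "hd (rotate i xs) = rotate i xs ! 0" by (simp add: hd_conv_nth)
  also have "\<dots> = xs ! i" using i nth_rotate[of 0 xs i] by (cases xs) auto
  finally show ?thesis using i by auto
qed


definition deg :: "'a \<Rightarrow> 'a set multiset \<Rightarrow> nat" where
  "deg x M = size (filter_mset (\<lambda>e. x \<in> e) M)"

definition good :: "'a set multiset \<Rightarrow> bool" where
  "good M \<longleftrightarrow> (\<forall>e\<in>#M. card e = 2)"

lemma deg_plus[simp]: "deg x (A + B) = deg x A + deg x B"
  by (simp add: deg_def)

lemma deg_add_mset[simp]: "deg x (add_mset e A) = (if x \<in> e then 1 else 0) + deg x A"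
  by (simp add: deg_def)

lemma deg_empty[simp]: "deg x {#} = 0"
  by (simp add: deg_def)

lemma deg_diff: "B \<subseteq># A \<Longrightarrow> deg x (A - B) = deg x A - deg x B"
  unfolding deg_def filter_diff_mset
  by (rule size_Diff_submset) (rule multiset_filter_mono)

lemma deg_le: "B \<subseteq># A \<Longrightarrow> deg x B \<le> deg x A"
  unfolding deg_def by (intro size_mset_mono multiset_filter_mono)

lemma good_subset: "good A \<Longrightarrow> B \<subseteq># A \<Longrightarrow> good B"
  unfolding good_def by (meson mset_subset_eqD)

lemma good_plus[simp]: "good (A + B) \<longleftrightarrow> good A \<and> good B"
  unfolding good_def by auto

lemma good_add[simp]: "good (add_mset e A) \<longleftrightarrow> card e = 2 \<and> good A"
  unfolding good_def by auto

lemma subset_add_noelem: "A \<subseteq># add_mset a B \<Longrightarrow> a \<notin># A \<Longrightarrow> A \<subseteq># B"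
  unfolding subseteq_mset_def
  by (metis count_add_mset count_eq_zero_iff le_zero_eq nat_le_linear)

lemma subset_add_elem: "A \<subseteq># add_mset a B \<Longrightarrow> A - {#a#} \<subseteq># B"
  unfolding subseteq_mset_def
proof (intro allI)
  fix x assume h: "\<forall>x. count A x \<le> count (add_mset a B) x"
  show "count (A - {#a#}) x \<le> count B x"
    using h[rule_format, of x] by (cases "x = a") auto
qed

lemma filter_or_length:
  "(\<forall>p\<in>set zs. \<not> (P p \<and> Q p)) \<Longrightarrow> length (filter (\<lambda>p. P p \<or> Q p) zs) = length (filter P zs) + length (filter Q zs)"
  by (induction zs) auto

lemma filter_fst_zip: "length ys = length xs \<Longrightarrow> length (filter (\<lambda>p. fst p = x) (zip xs ys)) = count (mset xs) x"
proof (induction xs arbitrary: ys)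
  case Nil then show ?case by simp
next
  case (Cons a xs) then show ?case by (cases ys) auto
qed

lemma filter_snd_zip: "length ys = length xs \<Longrightarrow> length (filter (\<lambda>p. snd p = x) (zip xs ys)) = count (mset ys) x"
proof (induction xs arbitrary: ys)
  case Nil then show ?case by simp
next
  case (Cons a xs) then show ?case by (cases ys) auto
qed

lemma deg_ec:
  assumes "good (ec xs)"
  shows "deg x (ec xs) = 2 * count (mset xs) x"
proof -
  let ?zs = "zip xs (rotate1 xs)"
  have nl: "\<forall>p\<in>set ?zs. \<not> (fst p = x \<and> snd p = x)"
  proof
    fix p assume p: "p \<in> set ?zs"
    then have "{fst p, snd p} \<in># ec xs" unfolding ec_def by (auto simp: image_iff intro!: bexI[of _ p])
    then have "card {fst p, snd p} = 2" using assms unfolding good_def by blast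
    then show "\<not> (fst p = x \<and> snd p = x)" by auto
  qed
  have "deg x (ec xs) = length (filter (\<lambda>e. x \<in> e) (map (\<lambda>(a,b). {a,b}) ?zs))"
    unfolding deg_def ec_def by (simp only: mset_filter[symmetric] size_mset)
  also have "\<dots> = length (filter (\<lambda>p. fst p = x \<or> snd p = x) ?zs)"
    by (simp add: filter_map comp_def case_prod_beta eq_commute)
  also have "\<dots> = length (filter (\<lambda>p. fst p = x) ?zs) + length (filter (\<lambda>p. snd p = x) ?zs)"
    using nl by (rule filter_or_length)
  also have "\<dots> = count (mset xs) x + count (mset (rotate1 xs)) x"
    by (simp add: filter_fst_zip filter_snd_zip)
  also have "\<dots> = 2 * count (mset xs) x" by (cases xs) simp_all
  finally show ?thesis .
qed

lemma even_deg_ec: "good (ec xs) \<Longrightarrow> even (deg x (ec xs))"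
  by (simp add: deg_ec)


lemma card2_other: "card e = 2 \<Longrightarrow> v \<in> e \<Longrightarrow> \<exists>x. e = {v, x} \<and> x \<noteq> v"
  by (auto simp: card_2_iff)

lemma deg_pos_elem: "0 < deg x M \<Longrightarrow> \<exists>e. e \<in># M \<and> x \<in> e"
proof -
  assume "0 < deg x M"
  then have "size (filter_mset (\<lambda>e. x \<in> e) M) \<noteq> 0" unfolding deg_def by linarith
  then have "filter_mset (\<lambda>e. x \<in> e) M \<noteq> {#}" by (metis size_empty)
  then obtain e where "e \<in># filter_mset (\<lambda>e. x \<in> e) M" by blast
  then show ?thesis by auto
qed

lemma CT:
  assumes "good M" "\<forall>x. even (deg x M)" "e0 \<in># M" "v \<in> e0"
  shows "\<exists>C. v \<in> set C \<and> ec C \<subseteq># M \<and> C \<noteq> []"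
  using assms
proof (induction "size M" arbitrary: M e0 rule: less_induct)
  case less
  have gM: "good M" and evM: "\<forall>x. even (deg x M)" and e0M: "e0 \<in># M" and ve0: "v \<in> e0" by fact+
  have c0: "card e0 = 2" using gM e0M unfolding good_def by blast
  obtain x where e0: "e0 = {v, x}" "x \<noteq> v" using card2_other[OF c0 ve0] by blast
  obtain M1 where Meq: "M = add_mset e0 M1" using e0M by (blast dest: multi_member_split)
  have "deg x M = 1 + deg x M1" unfolding Meq using e0 by simp
  moreover have "even (deg x M)" using evM by blast
  ultimately have "0 < deg x M1" by presburger
  then obtain e1 where e1M: "e1 \<in># M1" and xe1: "x \<in> e1" using deg_pos_elem[of x M1] by blast
  have c1: "card e1 = 2" using gM e1M unfolding good_def Meq by simp
  obtain y where e1: "e1 = {x, y}" "y \<noteq> x" using card2_other[OF c1 xe1] by blast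
  obtain M0 where M1eq: "M1 = add_mset e1 M0" using e1M by (blast dest: multi_member_split)
  have Mfull: "M = M0 + {#e0, e1#}" using Meq M1eq by simp
  let ?M0 = M0
  show ?case
  proof (cases "y = v")
    case True
    have "ec [v, x] = {#e0, e1#}" using True e0 e1 by (simp add: ec_def insert_commute)
    then have "ec [v, x] \<subseteq># M" using Mfull by simp
    then show ?thesis by (intro exI[of _ "[v,x]"]) simp
  next
    case False
    let ?e' = "{v, y}"
    let ?M' = "add_mset ?e' ?M0"
    have "good ?M0" using gM unfolding Mfull by simp
    moreover have "card ?e' = 2" using False by simp
    ultimately have gM': "good ?M'" by simp
    have evM': "\<forall>z. even (deg z ?M')"
    proof
      fix z
      have dM: "deg z M = deg z ?M0 + (if z \<in> e0 then 1 else 0) + (if z \<in> e1 then 1 else 0)"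
        using Mfull by simp
      have dM': "deg z ?M' = (if z \<in> ?e' then 1 else 0) + deg z ?M0" by simp
      have "even (deg z M)" using evM by blast
      then show "even (deg z ?M')" using dM dM' e0 e1 False by (auto split: if_splits)
    qed
    have "size ?M' < size M" using Mfull by simp
    then obtain C' where C': "v \<in> set C'" "ec C' \<subseteq># ?M'" "C' \<noteq> []"
      using less.hyps[of ?M' ?e'] gM' evM' by auto
    show ?thesis
    proof (cases "?e' \<in># ec C'")
      case False
      then have "ec C' \<subseteq># ?M0" using subset_add_noelem[OF C'(2)] by blast
      moreover have "?M0 \<subseteq># M" unfolding Mfull by simp
      ultimately have "ec C' \<subseteq># M" by (rule subset_mset.order_trans)
      then show ?thesis using C' by blast
    next
      case True
      then obtain k where k: "?e' = {last (rotate k C'), hd (rotate k C')}" using ec_rotate_to_edge[of ?e' C'] by blast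
      let ?C2 = "rotate k C'"
      have C2ne: "?C2 \<noteq> []" using C'(3) by simp
      have ecC2: "ec ?C2 = ec C'" by (rule ec_rotate)
      have sn: "ec (?C2 @ [x]) + {#{last ?C2, hd ?C2}#} = ec ?C2 + {#{last ?C2, x}#} + {#{x, hd ?C2}#}"
        using C2ne by (rule ec_snoc)
      have P: "{#{last ?C2, x}#} + {#{x, hd ?C2}#} = {#e0, e1#}"
      proof -
        have "(last ?C2 = v \<and> hd ?C2 = y) \<or> (last ?C2 = y \<and> hd ?C2 = v)"
          using k unfolding doubleton_eq_iff by auto
        then show ?thesis using e0 e1 by (auto simp: insert_commute)
      qed
      have "ec (?C2 @ [x]) + {#?e'#} = ec C' + ({#{last ?C2, x}#} + {#{x, hd ?C2}#})"
        using sn by (simp only: k[symmetric] ecC2 add.assoc)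
      then have eqn: "ec (?C2 @ [x]) + {#?e'#} = ec C' + {#e0, e1#}"
        by (simp only: P)
      obtain D where D: "ec C' = add_mset ?e' D" using True by (blast dest: multi_member_split)
      have "ec C' - {#?e'#} \<subseteq># ?M0" using C'(2) by (rule subset_add_elem)
      then have "D \<subseteq># ?M0" using D by simp
      moreover have "ec (?C2 @ [x]) = D + {#e0, e1#}"
        using eqn D by simp
      ultimately have "ec (?C2 @ [x]) \<subseteq># M" using Mfull by (simp add: subset_mset.add_right_mono)
      moreover have "v \<in> set (?C2 @ [x])" using C'(1) by simp
      ultimately show ?thesis by blast
    qed
  qed
qed


lemma H:
  assumes "good M" "\<forall>x. even (deg x M)" "W \<noteq> []"
  shows "\<exists>W' R. ec W' + R = ec W + M \<and> R \<subseteq># M \<and> set W \<subseteq> set W' \<and>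
     set W' \<subseteq> set W \<union> \<Union>(set_mset M) \<and> (\<forall>e\<in>#R. e \<inter> set W' = {}) \<and> W' \<noteq> []"
  using assms
proof (induction "size M" arbitrary: M W rule: less_induct)
  case less
  have gM: "good M" and evM: "\<forall>x. even (deg x M)" and Wne: "W \<noteq> []" by fact+
  show ?case
  proof (cases "\<exists>e\<in>#M. e \<inter> set W \<noteq> {}")
    case False
    then show ?thesis using Wne by (intro exI[of _ W] exI[of _ M]) auto
  next
    case True
    then obtain e v where e: "e \<in># M" "v \<in> e" "v \<in> set W" by blast
    obtain C where C: "v \<in> set C" "ec C \<subseteq># M" "C \<noteq> []" using CT[OF gM evM e(1) e(2)] by blast
    obtain k1 where k1: "hd (rotate k1 W) = v" using rotate_to_hd[OF e(3)] by blast
    obtain k2 where k2: "hd (rotate k2 C) = v" using rotate_to_hd[OF C(1)] by blast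
    let ?W3 = "rotate k2 C @ rotate k1 W"
    have ec3: "ec ?W3 = ec C + ec W"
      using ec_append_hd[of "rotate k2 C" "rotate k1 W"] k1 k2 C(3) Wne by (simp add: ec_rotate)
    obtain M2 where M2: "M = ec C + M2" using C(2) by (metis subset_mset.add_diff_inverse)
    have gM2: "good M2" using gM unfolding M2 by simp
    have gC: "good (ec C)" using gM unfolding M2 by simp
    have evM2: "\<forall>x. even (deg x M2)"
    proof
      fix x
      have "even (deg x M)" using evM by blast
      moreover have "even (deg x (ec C))" using gC by (rule even_deg_ec)
      ultimately show "even (deg x M2)" unfolding M2 by simp
    qed
    have "size (ec C) > 0" using C(3) by (simp add: size_ec)
    then have sz: "size M2 < size M" unfolding M2 by simp
    have W3ne: "?W3 \<noteq> []" using Wne by simp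
    obtain W' R where IH: "ec W' + R = ec ?W3 + M2" "R \<subseteq># M2" "set ?W3 \<subseteq> set W'"
      "set W' \<subseteq> set ?W3 \<union> \<Union>(set_mset M2)" "\<forall>e\<in>#R. e \<inter> set W' = {}" "W' \<noteq> []"
      using less.hyps[OF sz gM2 evM2 W3ne] by blast
    have "ec W' + R = ec W + M" using IH(1) ec3 M2 by (simp add: ac_simps)
    moreover have "R \<subseteq># M" unfolding M2 using IH(2) by (rule subset_mset.order_trans) simp
    moreover have "set W \<subseteq> set W'" using IH(3) by simp
    moreover have "set C \<subseteq> \<Union>(set_mset M)"
    proof
      fix z assume "z \<in> set C"
      then obtain f where "f \<in># ec C" "z \<in> f" using set_sub_ec[of z C] by blast
      then show "z \<in> \<Union>(set_mset M)" unfolding M2 by auto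
    qed
    then have "set W' \<subseteq> set W \<union> \<Union>(set_mset M)" using IH(4) unfolding M2 by auto
    ultimately show ?thesis using IH(5) IH(6) by blast
  qed
qed


definition wm :: "('a \<Rightarrow> 'a \<Rightarrow> real) \<Rightarrow> 'a set multiset \<Rightarrow> real" where
  "wm w M = sum_mset (image_mset (ew w) M)"

lemma wm_plus[simp]: "wm w (A + B) = wm w A + wm w B"
  by (simp add: wm_def)

lemma wm_add[simp]: "wm w (add_mset e A) = ew w e + wm w A"
  by (simp add: wm_def)

lemma wm_empty[simp]: "wm w {#} = 0"
  by (simp add: wm_def)

lemma ew_pair:
  assumes "is_metric V w" "a \<in> V" "b \<in> V"
  shows "ew w {a, b} = w a b"
  unfolding ew_def
proof (rule the_equality)
  show "\<exists>u v. {a, b} = {u, v} \<and> w a b = w u v" by blast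
next
  fix c assume "\<exists>u v. {a, b} = {u, v} \<and> c = w u v"
  then obtain u v where uv: "{a, b} = {u, v}" "c = w u v" by blast
  have sym: "w b a = w a b" using assms unfolding is_metric_def by blast
  from uv(1) have "(a = u \<and> b = v) \<or> (a = v \<and> b = u)" unfolding doubleton_eq_iff by blast
  then show "c = w a b" using uv(2) sym by auto
qed

lemma w_nonneg:
  assumes "is_metric V w" "a \<in> V" "b \<in> V"
  shows "0 \<le> w a b"
proof (cases "a = b")
  case True then show ?thesis using assms unfolding is_metric_def by simp
next
  case False then show ?thesis using assms unfolding is_metric_def by (simp add: less_imp_le)
qed

lemma ew_nonneg:
  assumes "is_metric V w" "e \<subseteq> V" "e \<noteq> {}" "finite e" "card e \<le> 2"
  shows "0 \<le> ew w e"
proof -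
  obtain a where a: "a \<in> e" using assms(3) by blast
  show ?thesis
  proof (cases "e = {a}")
    case True
    then have "e = {a, a}" by simp
    then show ?thesis using ew_pair[OF assms(1), of a a] w_nonneg[OF assms(1), of a a] assms(2) a by simp
  next
    case False
    then obtain b where b: "b \<in> e" "b \<noteq> a" using a by blast
    have "e = {a, b}"
    proof (rule ccontr)
      assume "e \<noteq> {a, b}"
      then obtain c where "c \<in> e" "c \<noteq> a" "c \<noteq> b" using a b by blast
      then have "{a, b, c} \<subseteq> e" using a b by blast
      then have "card {a, b, c} \<le> card e" using assms(4) by (rule card_mono[rotated])
      moreover have "card {a, b, c} = 3" using b \<open>c \<noteq> a\<close> \<open>c \<noteq> b\<close> by simp
      ultimately show False using assms(5) by simp
    qed
    then show ?thesis using ew_pair[OF assms(1), of a b] w_nonneg[OF assms(1), of a b] assms(2) a b by simp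
  qed
qed

lemma ew_nonneg_pair: "is_metric V w \<Longrightarrow> a \<in> V \<Longrightarrow> b \<in> V \<Longrightarrow> 0 \<le> ew w {a, b}"
  using ew_pair w_nonneg by metis

lemma ec_elem_pair: "e \<in># ec xs \<Longrightarrow> \<exists>a b. e = {a, b} \<and> a \<in> set xs \<and> b \<in> set xs"
proof -
  assume "e \<in># ec xs"
  then obtain i where i: "i < length xs" "e = {xs ! i, xs ! (Suc i mod length xs)}" unfolding ec_nth by blast
  have "0 < length xs" using i(1) by (cases xs) auto
  then have "Suc i mod length xs < length xs" by simp
  then show ?thesis using i nth_mem by blast
qed

lemma ec_nonneg: "is_metric V w \<Longrightarrow> set xs \<subseteq> V \<Longrightarrow> e \<in># ec xs \<Longrightarrow> 0 \<le> ew w e"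
  using ec_elem_pair ew_nonneg_pair by (metis subsetD)

lemma SC:
  assumes "is_metric V w" "set W \<subseteq> V" "W \<noteq> []"
  shows "\<exists>D. distinct D \<and> set D = set W \<and> wm w (ec D) \<le> wm w (ec W)"
  using assms(2,3)
proof (induction "length W" arbitrary: W rule: less_induct)
  case less
  show ?case
  proof (cases "distinct W")
    case True then show ?thesis by blast
  next
    case False
    then obtain p x q r where W: "W = p @ [x] @ q @ [x] @ r" using not_distinct_decomp by blast
    let ?W2 = "q @ [x] @ r @ p"
    have rot: "rotate (length p) W = x # ?W2" unfolding W by (simp add: rotate_append)
    have "ec W = ec (x # ?W2)" using ec_rotate[of "length p" W] rot by simp
    also have "\<dots> = ec (?W2 @ [x])" using ec_rotate1[of "x # ?W2"] by simp
    finally have ecW: "ec W = ec (?W2 @ [x])" .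
    have W2ne: "?W2 \<noteq> []" by simp
    have sn: "ec (?W2 @ [x]) + {#{last ?W2, hd ?W2}#} = ec ?W2 + {#{last ?W2, x}#} + {#{x, hd ?W2}#}"
      using W2ne by (rule ec_snoc)
    have setW2: "set ?W2 = set W" unfolding W by auto
    have l1: "last ?W2 \<in> set ?W2" using W2ne by (rule last_in_set)
    have h1: "hd ?W2 \<in> set ?W2" using W2ne by (rule hd_in_set)
    have x1: "x \<in> set W" unfolding W by simp
    have inV: "last ?W2 \<in> V" "hd ?W2 \<in> V" "x \<in> V"
      using less.prems(1) setW2 l1 h1 x1 by blast+
    have tri: "w (last ?W2) (hd ?W2) \<le> w (last ?W2) x + w x (hd ?W2)"
      using assms(1) inV unfolding is_metric_def by blast
    have "wm w (ec (?W2 @ [x])) + ew w {last ?W2, hd ?W2} = wm w (ec ?W2) + ew w {last ?W2, x} + ew w {x, hd ?W2}"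
      using arg_cong[OF sn, of "wm w"] by simp
    then have le: "wm w (ec ?W2) \<le> wm w (ec W)"
      using tri ew_pair[OF assms(1)] inV ecW by auto
    have "length ?W2 < length W" unfolding W by simp
    then obtain D where D: "distinct D" "set D = set ?W2" "wm w (ec D) \<le> wm w (ec ?W2)"
      using less.hyps[of ?W2] less.prems setW2 W2ne by blast
    then show ?thesis using le setW2 by (intro exI[of _ D]) auto
  qed
qed

lemma sum_set_mset_le:
  fixes f :: "'b \<Rightarrow> real"
  shows "(\<forall>e\<in>#M. 0 \<le> f e) \<Longrightarrow> sum f (set_mset M) \<le> sum_mset (image_mset f M)"
proof (induction M)
  case empty then show ?case by simp
next
  case (add a M)
  show ?case
  proof (cases "a \<in># M")
    case True
    then have "sum f (set_mset (add_mset a M)) = sum f (set_mset M)" by (simp add: insert_absorb)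
    then show ?thesis using add by auto
  next
    case False
    then have "sum f (set_mset (add_mset a M)) = f a + sum f (set_mset M)" by simp
    then show ?thesis using add by auto
  qed
qed

lemma TSP_le_walk:
  assumes "finite V" "card V \<ge> 3" "is_metric V w" "set W = V"
  shows "TSP V w \<le> wm w (ec W)"
proof -
  have Wne: "W \<noteq> []" using assms(2,4) by auto
  obtain D where D: "distinct D" "set D = V" "wm w (ec D) \<le> wm w (ec W)"
    using SC[OF assms(3) _ Wne] assms(4) by auto
  let ?H = "set_mset (ec D)"
  have "?H = {{D ! i, D ! ((i + 1) mod length D)} | i. i < length D}"
    by (auto simp: ec_nth)
  then have ham: "ham_cycle V ?H" unfolding ham_cycle_def using D by blast
  have sub: "{H. ham_cycle V H} \<subseteq> Pow (Pow V)"
  proof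
    fix H assume "H \<in> {H. ham_cycle V H}"
    then obtain xs where xs: "distinct xs" "set xs = V" "H = {{xs ! i, xs ! ((i + 1) mod length xs)} | i. i < length xs}"
      unfolding ham_cycle_def by blast
    have "\<And>i. i < length xs \<Longrightarrow> {xs ! i, xs ! ((i + 1) mod length xs)} \<subseteq> V"
    proof -
      fix i assume i: "i < length xs"
      then have "0 < length xs" by (cases xs) auto
      then have "(i + 1) mod length xs < length xs" by simp
      then show "{xs ! i, xs ! ((i + 1) mod length xs)} \<subseteq> V" using i xs(2) nth_mem by blast
    qed
    then show "H \<in> Pow (Pow V)" using xs(3) by blast
  qed
  have fin: "finite {wt w H | H. ham_cycle V H}"
  proof -
    have "{wt w H | H. ham_cycle V H} = wt w ` {H. ham_cycle V H}" by blast
    moreover have "finite {H. ham_cycle V H}" using sub assms(1) by (meson finite_Pow_iff rev_finite_subset)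
    ultimately show ?thesis by simp
  qed
  have "TSP V w \<le> wt w ?H" unfolding TSP_def using fin ham by (intro Min_le) blast+
  also have "wt w ?H \<le> wm w (ec D)" unfolding wt_def wm_def
    by (rule sum_set_mset_le) (use ec_nonneg[OF assms(3)] D(2) in blast)
  also have "\<dots> \<le> wm w (ec W)" by (rule D(3))
  finally show ?thesis .
qed


fun pe :: "'a list \<Rightarrow> 'a set set" where
  "pe (x # y # zs) = insert {x, y} (pe (y # zs))"
| "pe _ = {}"

lemma path_edges_pe: "path_edges xs = pe xs"
proof (induction xs rule: pe.induct)
  case (1 x y zs)
  have "path_edges (x # y # zs) = insert {x, y} (path_edges (y # zs))"
  proof
    show "path_edges (x # y # zs) \<subseteq> insert {x, y} (path_edges (y # zs))"
    proof
      fix e assume "e \<in> path_edges (x # y # zs)"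
      then obtain i where i: "i + 1 < length (x # y # zs)" "e = {(x # y # zs) ! i, (x # y # zs) ! (i + 1)}"
        unfolding path_edges_def by blast
      show "e \<in> insert {x, y} (path_edges (y # zs))"
      proof (cases i)
        case 0 then show ?thesis using i by simp
      next
        case (Suc j)
        then have "j + 1 < length (y # zs)" "e = {(y # zs) ! j, (y # zs) ! (j + 1)}" using i by auto
        then show ?thesis unfolding path_edges_def by blast
      qed
    qed
  next
    show "insert {x, y} (path_edges (y # zs)) \<subseteq> path_edges (x # y # zs)"
    proof
      fix e assume "e \<in> insert {x, y} (path_edges (y # zs))"
      then consider "e = {x, y}" | "e \<in> path_edges (y # zs)" by blast
      then show "e \<in> path_edges (x # y # zs)"
      proof cases
        case 1
        have "0 + 1 < length (x # y # zs)" "e = {(x # y # zs) ! 0, (x # y # zs) ! (0 + 1)}" using 1 by auto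
        then show ?thesis unfolding path_edges_def by blast
      next
        case 2
        then obtain j where j: "j + 1 < length (y # zs)" "e = {(y # zs) ! j, (y # zs) ! (j + 1)}"
          unfolding path_edges_def by blast
        then have "Suc j + 1 < length (x # y # zs)" "e = {(x # y # zs) ! Suc j, (x # y # zs) ! (Suc j + 1)}" by auto
        then show ?thesis unfolding path_edges_def by blast
      qed
    qed
  qed
  then show ?case using 1 by simp
next
  case ("2_1") then show ?case by (simp add: path_edges_def)
next
  case ("2_2" v) then show ?case by (simp add: path_edges_def)
qed

lemma consec_iff_pe: "(\<forall>i. i + 1 < length xs \<longrightarrow> {xs ! i, xs ! (i + 1)} \<in> F) \<longleftrightarrow> pe xs \<subseteq> F"
  unfolding path_edges_pe[symmetric] path_edges_def by blast

lemma is_path_pe: "is_path F u v xs \<longleftrightarrow> xs \<noteq> [] \<and> hd xs = u \<and> last xs = v \<and> distinct xs \<and> pe xs \<subseteq> F"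
  unfolding is_path_def consec_iff_pe by blast

lemma is_cycle_pe: "is_cycle F xs \<longleftrightarrow> length xs \<ge> 4 \<and> hd xs = last xs \<and> distinct (tl xs) \<and> pe xs \<subseteq> F"
  unfolding is_cycle_def consec_iff_pe by blast

lemma pe_append: "pe (xs @ y # ys) = pe (xs @ [y]) \<union> pe (y # ys)"
proof (induction xs rule: pe.induct)
  case (1 x z zs) then show ?case by auto
next
  case "2_1" then show ?case by simp
next
  case ("2_2" v) then show ?case by (cases ys) auto
qed

lemma pe_rev: "pe (rev xs) = pe xs"
proof (induction xs rule: pe.induct)
  case (1 x y zs)
  have "pe (rev (x # y # zs)) = pe (rev zs @ y # [x])" by simp
  also have "\<dots> = pe (rev zs @ [y]) \<union> pe [y, x]" by (rule pe_append)
  also have "\<dots> = pe (y # zs) \<union> {{x, y}}" using 1 by (simp add: insert_commute)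
  finally show ?case by auto
qed auto

lemma pe_subset_set: "e \<in> pe xs \<Longrightarrow> e \<subseteq> set xs"
  by (induction xs rule: pe.induct) auto

lemma finite_pe: "finite (pe xs)"
  by (induction xs rule: pe.induct) auto

lemma pe_split: "e \<in> pe xs \<Longrightarrow> \<exists>p a b q. xs = p @ a # b # q \<and> e = {a, b}"
proof (induction xs rule: pe.induct)
  case (1 x y zs)
  show ?case
  proof (cases "e = {x, y}")
    case True then show ?thesis by (intro exI[of _ "[]"]) auto
  next
    case False
    then have "e \<in> pe (y # zs)" using 1 by simp
    then obtain p a b q where "y # zs = p @ a # b # q" "e = {a, b}" using 1 by blast
    then show ?thesis by (intro exI[of _ "x # p"]) auto
  qed
qed auto

lemma pe_mid: "pe (p @ a # b # q) = pe (p @ [a]) \<union> {{a, b}} \<union> pe (b # q)"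
  using pe_append[of p a "b # q"] by auto

lemma pe_join:
  assumes "xs \<noteq> []" "ys \<noteq> []" "last xs = hd ys"
  shows "pe (xs @ tl ys) = pe xs \<union> pe ys" "last (xs @ tl ys) = last ys" "hd (xs @ tl ys) = hd xs"
proof -
  obtain y ys' where ys: "ys = y # ys'" using assms(2) by (cases ys) auto
  have xs: "xs = butlast xs @ [y]" using append_butlast_last_id[OF assms(1)] assms(3) ys by simp
  have "pe (xs @ tl ys) = pe (butlast xs @ y # ys')" using xs ys by (metis append.assoc append_Cons append_Nil list.sel(3))
  also have "\<dots> = pe (butlast xs @ [y]) \<union> pe (y # ys')" by (rule pe_append)
  finally show "pe (xs @ tl ys) = pe xs \<union> pe ys" using xs ys by simp
  show "last (xs @ tl ys) = last ys" using assms ys by (cases ys') auto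
  show "hd (xs @ tl ys) = hd xs" using assms by simp
qed

lemma walk_to_path:
  assumes "xs \<noteq> []"
  shows "\<exists>zs. distinct zs \<and> zs \<noteq> [] \<and> hd zs = hd xs \<and> last zs = last xs \<and> pe zs \<subseteq> pe xs"
  using assms
proof (induction "length xs" arbitrary: xs rule: less_induct)
  case less
  show ?case
  proof (cases "distinct xs")
    case True then show ?thesis using less.prems by blast
  next
    case False
    then obtain p x q r where xs: "xs = p @ [x] @ q @ [x] @ r" using not_distinct_decomp by blast
    let ?ys = "p @ x # r"
    have len: "length ?ys < length xs" unfolding xs by simp
    have pe1: "pe ?ys \<subseteq> pe xs"
    proof -
      have "pe ?ys = pe (p @ [x]) \<union> pe (x # r)" by (rule pe_append)
      moreover have "pe xs = pe (p @ [x]) \<union> pe (x # q @ x # r)" unfolding xs using pe_append[of p x "q @ x # r"] by simp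
      moreover have "pe (x # q @ x # r) = pe (x # q @ [x]) \<union> pe (x # r)" using pe_append[of "x # q" x r] by simp
      ultimately show ?thesis by blast
    qed
    have hd1: "hd ?ys = hd xs" unfolding xs by (cases p) auto
    have last1: "last ?ys = last xs" unfolding xs by (cases r) auto
    obtain zs where zs: "distinct zs" "zs \<noteq> []" "hd zs = hd ?ys" "last zs = last ?ys" "pe zs \<subseteq> pe ?ys"
      using less.hyps[OF len] by blast
    show ?thesis using zs pe1 hd1 last1 by (intro exI[of _ zs]) auto
  qed
qed


lemma path_sub_unique:
  assumes acyc: "\<not> (\<exists>c. is_cycle T c)"
    and px: "is_path T u v xs" and py: "is_path T u v ys"
  shows "pe xs \<subseteq> pe ys"
proof
  fix f assume fx: "f \<in> pe xs"
  show "f \<in> pe ys"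
  proof (rule ccontr)
    assume fy: "f \<notin> pe ys"
    have xs: "xs \<noteq> []" "hd xs = u" "last xs = v" "distinct xs" "pe xs \<subseteq> T" using px unfolding is_path_pe by auto
    have ys: "ys \<noteq> []" "hd ys = u" "last ys = v" "distinct ys" "pe ys \<subseteq> T" using py unfolding is_path_pe by auto
    obtain p a b q where split: "xs = p @ a # b # q" "f = {a, b}" using pe_split[OF fx] by blast
    have ab: "a \<noteq> b" using xs(4) split(1) by auto
    have b_notin: "b \<notin> set (p @ [a])" using xs(4) split(1) by auto
    have a_notin: "a \<notin> set (b # q)" using xs(4) split(1) by auto
    have peX: "pe xs = pe (p @ [a]) \<union> {{a, b}} \<union> pe (b # q)" unfolding split(1) by (rule pe_mid)
    have f1: "f \<notin> pe (p @ [a])" using pe_subset_set b_notin split(2) by blast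
    have f2: "f \<notin> pe (b # q)" using pe_subset_set a_notin split(2) by blast
    let ?L1 = "rev (p @ [a])"
    let ?L3 = "rev (b # q)"
    have L1: "?L1 \<noteq> []" "hd ?L1 = a" "last ?L1 = u"
      using xs(2) split(1) by (auto simp: last_rev hd_append)
    have L3: "?L3 \<noteq> []" "hd ?L3 = v" "last ?L3 = b"
      using xs(3) split(1) by (auto simp: hd_rev)
    have J1: "pe (?L1 @ tl ys) = pe ?L1 \<union> pe ys" "last (?L1 @ tl ys) = last ys" "hd (?L1 @ tl ys) = hd ?L1"
      using pe_join[of ?L1 ys] L1 ys by auto
    let ?L2 = "?L1 @ tl ys"
    have L2ne: "?L2 \<noteq> []" using L1 by simp
    have J2: "pe (?L2 @ tl ?L3) = pe ?L2 \<union> pe ?L3" "last (?L2 @ tl ?L3) = last ?L3" "hd (?L2 @ tl ?L3) = hd ?L2"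
      using pe_join[of ?L2 ?L3] L2ne L3 J1 ys by auto
    let ?L = "?L2 @ tl ?L3"
    have peL0: "pe ?L = pe ?L1 \<union> pe ys \<union> pe ?L3"
      by (subst J2(1), subst J1(1)) (rule refl)
    have r1: "pe ?L1 = pe (p @ [a])" by (rule pe_rev)
    have r3: "pe ?L3 = pe (b # q)" by (rule pe_rev)
    have peL: "pe ?L = pe (p @ [a]) \<union> pe ys \<union> pe (b # q)" using peL0 unfolding r1 r3 .
    have peLT: "pe ?L \<subseteq> T - {f}"
      using peL peX xs(5) ys(5) f1 f2 fy by blast
    have Lne: "?L \<noteq> []" using L2ne by simp
    have hdL: "hd ?L = a" using J2(3) J1(3) L1(2) by (rule trans[OF trans])
    have lastL: "last ?L = b" using J2(2) L3(3) by (rule trans)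
    obtain zs0 where zs0: "distinct zs0" "zs0 \<noteq> []" "hd zs0 = hd ?L" "last zs0 = last ?L" "pe zs0 \<subseteq> pe ?L"
      using walk_to_path[OF Lne] by blast
    obtain zs where zs: "distinct zs" "zs \<noteq> []" "hd zs = a" "last zs = b" "pe zs \<subseteq> T - {f}"
      using zs0 hdL lastL peLT by (intro that[of zs0]) auto
    have len: "length zs \<ge> 3"
    proof (rule ccontr)
      assume "\<not> length zs \<ge> 3"
      then have "length zs \<le> 2" by simp
      moreover have "length zs \<noteq> 1"
      proof
        assume "length zs = 1"
        then obtain c where "zs = [c]" by (cases zs) auto
        then show False using zs ab by simp
      qed
      moreover have "length zs \<noteq> 0" using zs by simp
      moreover have "length zs \<noteq> 2"
      proof
        assume "length zs = 2"
        then obtain c d where "zs = [c, d]" by (cases zs; cases "tl zs") auto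
        then have "zs = [a, b]" using zs by simp
        then show False using zs(5) split(2) by simp
      qed
      ultimately show False by linarith
    qed
    let ?c = "b # zs"
    have "is_cycle T ?c" unfolding is_cycle_pe
    proof (intro conjI)
      show "4 \<le> length ?c" using len by simp
      show "hd ?c = last ?c" using zs by simp
      show "distinct (tl ?c)" using zs by simp
      obtain zs' where zs': "zs = a # zs'" using zs by (cases zs) auto
      have pc: "pe ?c = insert {b, a} (pe zs)" unfolding zs' by simp
      have abT: "{a, b} \<in> T" using peX xs(5) by blast
      have ba: "{b, a} = {a, b}" by blast
      have "insert {b, a} (pe zs) \<subseteq> T" unfolding ba using abT zs(5) by blast
      then show "pe ?c \<subseteq> T" unfolding pc .
    qed
    then show False using acyc by blast
  qed
qed

lemma path_unique:
  assumes "\<not> (\<exists>c. is_cycle T c)" "is_path T u v xs" "is_path T u v ys"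
  shows "pe xs = pe ys"
  using path_sub_unique[OF assms] path_sub_unique[OF assms(1,3,2)] by blast

lemma is_path_rev: "is_path T u v xs \<Longrightarrow> is_path T v u (rev xs)"
  unfolding is_path_pe by (auto simp: pe_rev hd_rev last_rev)

lemma cov_eq:
  assumes "\<not> (\<exists>c. is_cycle T c)" "is_path T a b xs"
  shows "cov T {a, b} = pe xs"
proof
  show "pe xs \<subseteq> cov T {a, b}" unfolding cov_def path_edges_pe using assms(2) by blast
next
  show "cov T {a, b} \<subseteq> pe xs"
  proof
    fix f assume "f \<in> cov T {a, b}"
    then obtain zs u v where zs: "f \<in> pe zs" "{a, b} = {u, v}" "is_path T u v zs"
      unfolding cov_def path_edges_pe by blast
    from zs(2) have "(u = a \<and> v = b) \<or> (u = b \<and> v = a)" unfolding doubleton_eq_iff by blast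
    then show "f \<in> pe xs"
    proof
      assume "u = a \<and> v = b"
      then show ?thesis using path_unique[OF assms(1) zs(3), of xs] assms(2) zs(1) by simp
    next
      assume "u = b \<and> v = a"
      then have rp: "is_path T a b (rev zs)" using is_path_rev zs(3) by simp
      have "pe (rev zs) = pe xs" using path_unique[OF assms(1) rp assms(2)] .
      then show ?thesis using zs(1) by (simp add: pe_rev)
    qed
  qed
qed

lemma cov_sub: "cov T e \<subseteq> T"
  unfolding cov_def path_edges_pe is_path_pe by blast

lemma path_deg:
  "distinct xs \<Longrightarrow> xs \<noteq> [] \<Longrightarrow>
   card {e \<in> pe xs. x \<in> e} + (if x = hd xs then 1 else 0) + (if x = last xs then 1 else 0)
     = (if x \<in> set xs then 2 else 0)"
proof (induction xs rule: pe.induct)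
  case (1 y z zs)
  have notin: "{y, z} \<notin> pe (z # zs)" using pe_subset_set 1(2) by fastforce
  have fin: "finite {e \<in> pe (z # zs). x \<in> e}" by (rule finite_subset[of _ "pe (z#zs)"]) (auto simp: finite_pe)
  have "{e \<in> pe (y # z # zs). x \<in> e} = (if x \<in> {y, z} then insert {y, z} {e \<in> pe (z # zs). x \<in> e} else {e \<in> pe (z # zs). x \<in> e})"
    by auto
  then have c: "card {e \<in> pe (y # z # zs). x \<in> e} = (if x \<in> {y, z} then 1 else 0) + card {e \<in> pe (z # zs). x \<in> e}"
    using notin fin by simp
  have IH: "card {e \<in> pe (z # zs). x \<in> e} + (if x = z then 1 else 0) + (if x = last (z # zs) then 1 else 0)
     = (if x \<in> set (z # zs) then 2 else 0)" using 1 by simp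
  have yn: "y \<notin> set (z # zs)" using 1(2) by simp
  show ?case using c IH yn by (auto split: if_splits)
qed auto


lemma card_filter_sum: "finite A \<Longrightarrow> card {x\<in>A. P x} = (\<Sum>x\<in>A. if P x then 1 else (0::nat))"
proof -
  assume fin: "finite A"
  have "(\<Sum>x\<in>A. if P x then 1 else (0::nat)) = card (A \<inter> {x. P x})"
    using sum.inter_restrict[OF fin, of "\<lambda>_. (1::nat)" "{x. P x}"] by simp
  moreover have "A \<inter> {x. P x} = {x\<in>A. P x}" by auto
  ultimately show ?thesis by simp
qed

lemma even_card_odd: "finite A \<Longrightarrow> even (card {a\<in>A. odd (g a :: nat)}) \<longleftrightarrow> even (\<Sum>a\<in>A. g a)"
proof (induction A rule: finite_induct)
  case empty then show ?case by simp
next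
  case (insert a A)
  have fin: "finite {b \<in> A. odd (g b)}" using insert(1) by simp
  have "{b \<in> insert a A. odd (g b)} = (if odd (g a) then insert a {b \<in> A. odd (g b)} else {b \<in> A. odd (g b)})"
    by auto
  then have "card {b \<in> insert a A. odd (g b)} = (if odd (g a) then 1 else 0) + card {b \<in> A. odd (g b)}"
    using insert(2) fin by simp
  then show ?case using insert(1,2,3) by auto
qed

lemma count_odd:
  fixes P :: "'a \<Rightarrow> bool"
  assumes "finite E"
  shows "(\<Sum>R\<in>Pow E. if odd (card {e\<in>R. P e}) then (1::real) else 0) = (if \<exists>e\<in>E. P e then 2 ^ card E / 2 else 0)"
  using assms
proof (induction E rule: finite_induct)
  case empty then show ?case by simp
next
  case (insert a E)
  let ?c = "\<lambda>R. card {e\<in>R. P e}"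
  let ?f = "\<lambda>R. if odd (?c R) then (1::real) else 0"
  have disj: "Pow E \<inter> insert a ` Pow E = {}" using insert(2) by auto
  have inj: "inj_on (insert a) (Pow E)" using insert(2) unfolding inj_on_def by (metis Pow_iff insert_absorb insert_ident subset_iff)
  have "sum ?f (Pow (insert a E)) = sum ?f (Pow E) + sum ?f (insert a ` Pow E)"
    unfolding Pow_insert using disj insert(1) by (simp add: sum.union_disjoint)
  also have "sum ?f (insert a ` Pow E) = sum (?f \<circ> insert a) (Pow E)"
    using inj by (rule sum.reindex)
  also have "sum (?f \<circ> insert a) (Pow E) = (\<Sum>R\<in>Pow E. if odd (?c R + (if P a then 1 else 0)) then 1 else 0)"
  proof (rule sum.cong)
    fix R assume "R \<in> Pow E"
    then have aR: "a \<notin> R" using insert(2) by auto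
    have "R \<subseteq> E" using \<open>R \<in> Pow E\<close> by simp
    then have "finite R" using insert(1) by (rule finite_subset)
    then have fin: "finite {e \<in> R. P e}" by simp
    have "{e \<in> insert a R. P e} = (if P a then insert a {e\<in>R. P e} else {e\<in>R. P e})" by auto
    then have "?c (insert a R) = ?c R + (if P a then 1 else 0)" using aR fin by simp
    then show "(?f \<circ> insert a) R = (if odd (?c R + (if P a then 1 else 0)) then 1 else 0)" by simp
  qed simp
  finally have eq: "sum ?f (Pow (insert a E)) = sum ?f (Pow E) + (\<Sum>R\<in>Pow E. if odd (?c R + (if P a then 1 else 0)) then 1 else 0)" .
  have cardE: "card (insert a E) = Suc (card E)" using insert by simp
  show ?case
  proof (cases "P a")
    case True
    have s1: "(\<Sum>R\<in>Pow E. ?f R + (if odd (?c R + 1) then 1 else 0)) = (\<Sum>R\<in>Pow E. (1::real))"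
      by (rule sum.cong) auto
    have "sum ?f (Pow E) + (\<Sum>R\<in>Pow E. if odd (?c R + 1) then 1 else 0) = (\<Sum>R\<in>Pow E. (1::real))"
      using s1 by (simp only: sum.distrib)
    also have "\<dots> = 2 ^ card E" using insert(1) by (simp add: card_Pow)
    finally show ?thesis using eq True cardE by simp
  next
    case False
    then have "sum ?f (Pow (insert a E)) = 2 * sum ?f (Pow E)" using eq by simp
    then show ?thesis using insert(3) False cardE by auto
  qed
qed


definition Dset :: "'b set \<Rightarrow> ('a \<Rightarrow> 'b set) \<Rightarrow> 'a set \<Rightarrow> 'b set" where
  "Dset T cv R = {f\<in>T. odd (card {e\<in>R. f \<in> cv e})}"

lemma avg_sum:
  fixes c :: "'b \<Rightarrow> real" and cv :: "'b \<Rightarrow> 'b set"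
  assumes finT: "finite T" and finE: "finite E" and sub: "\<forall>e\<in>E. cv e \<subseteq> T"
  shows "(\<Sum>R\<in>Pow E. sum c R - sum c (Dset T cv R)) = 2 ^ card E / 2 * (sum c E - sum c (\<Union>e\<in>E. cv e))"
proof -
  let ?k = "2 ^ card E / (2::real)"
  have A: "(\<Sum>R\<in>Pow E. sum c R) = ?k * sum c E"
  proof -
    have "(\<Sum>R\<in>Pow E. sum c R) = (\<Sum>R\<in>Pow E. \<Sum>e\<in>E. if e \<in> R then c e else 0)"
    proof (rule sum.cong)
      fix R assume "R \<in> Pow E"
      then have "E \<inter> R = R" by auto
      then show "sum c R = (\<Sum>e\<in>E. if e \<in> R then c e else 0)"
        using sum.inter_restrict[OF finE, of c R] by simp
    qed simp
    also have "\<dots> = (\<Sum>e\<in>E. \<Sum>R\<in>Pow E. if e \<in> R then c e else 0)" by (rule sum.swap)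
    also have "\<dots> = (\<Sum>e\<in>E. c e * ?k)"
    proof (rule sum.cong)
      fix e assume eE: "e \<in> E"
      have "(\<Sum>R\<in>Pow E. if e \<in> R then c e else 0) = c e * (\<Sum>R\<in>Pow E. if odd (card {e'\<in>R. e' = e}) then (1::real) else 0)"
      proof -
        have "\<And>R. card {e'\<in>R. e' = e} = (if e \<in> R then 1 else 0)"
        proof -
          fix R
          show "card {e'\<in>R. e' = e} = (if e \<in> R then 1 else 0)"
          proof (cases "e \<in> R")
            case True then have "{e'\<in>R. e' = e} = {e}" by auto
            then show ?thesis using True by simp
          next
            case False then have "{e'\<in>R. e' = e} = {}" by auto
            then show ?thesis using False by simp
          qed
        qed
        then have "(\<Sum>R\<in>Pow E. if e \<in> R then c e else 0) = (\<Sum>R\<in>Pow E. c e * (if odd (card {e'\<in>R. e' = e}) then (1::real) else 0))"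
          by (intro sum.cong) simp_all
        then show ?thesis by (simp only: sum_distrib_left)
      qed
      also have "\<dots> = c e * ?k" using count_odd[OF finE, of "\<lambda>e'. e' = e"] eE by simp
      finally show "(\<Sum>R\<in>Pow E. if e \<in> R then c e else 0) = c e * ?k" .
    qed simp
    also have "\<dots> = ?k * sum c E" by (subst sum_distrib_right[symmetric]) (rule mult.commute)
    finally show ?thesis .
  qed
  let ?U = "\<Union>e\<in>E. cv e"
  have UT: "?U \<subseteq> T" using sub by blast
  have B: "(\<Sum>R\<in>Pow E. sum c (Dset T cv R)) = ?k * sum c ?U"
  proof -
    have "(\<Sum>R\<in>Pow E. sum c (Dset T cv R)) = (\<Sum>R\<in>Pow E. \<Sum>f\<in>T. if odd (card {e\<in>R. f \<in> cv e}) then c f else 0)"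
    proof (rule sum.cong)
      fix R
      have "T \<inter> {f. odd (card {e\<in>R. f \<in> cv e})} = Dset T cv R" unfolding Dset_def by auto
      then show "sum c (Dset T cv R) = (\<Sum>f\<in>T. if odd (card {e\<in>R. f \<in> cv e}) then c f else 0)"
        using sum.inter_restrict[OF finT, of c "{f. odd (card {e\<in>R. f \<in> cv e})}"] by simp
    qed simp
    also have "\<dots> = (\<Sum>f\<in>T. \<Sum>R\<in>Pow E. if odd (card {e\<in>R. f \<in> cv e}) then c f else 0)" by (rule sum.swap)
    also have "\<dots> = (\<Sum>f\<in>T. if f \<in> ?U then c f * ?k else 0)"
    proof (rule sum.cong)
      fix f assume "f \<in> T"
      have "(\<Sum>R\<in>Pow E. if odd (card {e\<in>R. f \<in> cv e}) then c f else 0) = c f * (\<Sum>R\<in>Pow E. if odd (card {e\<in>R. f \<in> cv e}) then (1::real) else 0)"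
        unfolding sum_distrib_left by (intro sum.cong) simp_all
      also have "\<dots> = c f * (if \<exists>e\<in>E. f \<in> cv e then ?k else 0)"
        using count_odd[OF finE, of "\<lambda>e. f \<in> cv e"] by simp
      also have "\<dots> = (if f \<in> ?U then c f * ?k else 0)" by auto
      finally show "(\<Sum>R\<in>Pow E. if odd (card {e\<in>R. f \<in> cv e}) then c f else 0) = (if f \<in> ?U then c f * ?k else 0)" .
    qed simp
    also have "\<dots> = sum (\<lambda>f. c f * ?k) (T \<inter> ?U)" using sum.inter_restrict[OF finT, of "\<lambda>f. c f * ?k" ?U] by simp
    also have "T \<inter> ?U = ?U" using UT by blast
    also have "sum (\<lambda>f. c f * ?k) ?U = ?k * sum c ?U" by (subst sum_distrib_right[symmetric]) (rule mult.commute)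
    finally show ?thesis .
  qed
  have "(\<Sum>R\<in>Pow E. sum c R - sum c (Dset T cv R)) = (\<Sum>R\<in>Pow E. sum c R) - (\<Sum>R\<in>Pow E. sum c (Dset T cv R))"
    by (rule sum_subtractf)
  also have "\<dots> = ?k * sum c E - ?k * sum c ?U" using A B by simp
  finally show ?thesis by (simp add: right_diff_distrib)
qed

lemma exists_good_R:
  fixes c :: "'b \<Rightarrow> real" and cv :: "'b \<Rightarrow> 'b set"
  assumes finT: "finite T" and finE: "finite E" and sub: "\<forall>e\<in>E. cv e \<subseteq> T"
  shows "\<exists>R. R \<subseteq> E \<and> sum c R - sum c (Dset T cv R) \<le> (sum c E - sum c (\<Union>e\<in>E. cv e)) / 2"
proof (rule ccontr)
  assume "\<not> ?thesis"
  then have gt: "\<forall>R\<in>Pow E. (sum c E - sum c (\<Union>e\<in>E. cv e)) / 2 < sum c R - sum c (Dset T cv R)" by auto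
  have "(\<Sum>R\<in>Pow E. (sum c E - sum c (\<Union>e\<in>E. cv e)) / 2) < (\<Sum>R\<in>Pow E. sum c R - sum c (Dset T cv R))"
    using finE gt by (intro sum_strict_mono) auto
  also have "\<dots> = 2 ^ card E / 2 * (sum c E - sum c (\<Union>e\<in>E. cv e))" by (rule avg_sum[OF assms])
  finally show False using finE by (simp add: card_Pow)
qed

lemma parity_D:
  fixes cv :: "'a set \<Rightarrow> 'a set set"
  assumes finT: "finite T" and finR: "finite R" and sub: "\<forall>e\<in>R. cv e \<subseteq> T"
    and pev: "\<forall>e\<in>R. even (card {f\<in>cv e. x \<in> f} + (if x \<in> e then 1 else 0))"
  shows "even (card {f\<in>Dset T cv R. x \<in> f} + card {e\<in>R. x \<in> e})"
proof -
  let ?Tx = "{f\<in>T. x \<in> f}"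
  let ?cnt = "\<lambda>f. card {e\<in>R. f \<in> cv e}"
  have finTx: "finite ?Tx" using finT by simp
  have Dx: "{f\<in>Dset T cv R. x \<in> f} = {f\<in>?Tx. odd (?cnt f)}" unfolding Dset_def by auto
  have "even (card {f\<in>?Tx. odd (?cnt f)}) \<longleftrightarrow> even (\<Sum>f\<in>?Tx. ?cnt f)" by (rule even_card_odd[OF finTx])
  moreover have "(\<Sum>f\<in>?Tx. ?cnt f) = (\<Sum>e\<in>R. card {f\<in>cv e. x \<in> f})"
  proof -
    have "(\<Sum>f\<in>?Tx. ?cnt f) = (\<Sum>f\<in>?Tx. \<Sum>e\<in>R. if f \<in> cv e then 1 else 0)"
      using finR by (simp add: card_filter_sum)
    also have "\<dots> = (\<Sum>e\<in>R. \<Sum>f\<in>?Tx. if f \<in> cv e then 1 else 0)" by (rule sum.swap)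
    also have "\<dots> = (\<Sum>e\<in>R. card {f\<in>cv e. x \<in> f})"
    proof (rule sum.cong)
      fix e assume "e \<in> R"
      then have "{f\<in>?Tx. f \<in> cv e} = {f\<in>cv e. x \<in> f}" using sub by auto
      then show "(\<Sum>f\<in>?Tx. if f \<in> cv e then 1 else 0) = card {f\<in>cv e. x \<in> f}"
        using card_filter_sum[OF finTx, of "\<lambda>f. f \<in> cv e"] by simp
    qed simp
    finally show ?thesis .
  qed
  moreover have "even (\<Sum>e\<in>R. card {f\<in>cv e. x \<in> f} + (if x \<in> e then 1 else 0))"
    using pev by (intro dvd_sum) auto
  moreover have "(\<Sum>e\<in>R. card {f\<in>cv e. x \<in> f} + (if x \<in> e then 1 else 0)) = (\<Sum>e\<in>R. card {f\<in>cv e. x \<in> f}) + card {e\<in>R. x \<in> e}"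
    using finR by (simp add: sum.distrib card_filter_sum)
  ultimately show ?thesis using Dx by auto
qed


lemma wm_nonneg: "(\<forall>e\<in>#R. 0 \<le> ew w e) \<Longrightarrow> 0 \<le> wm w R"
  by (induction R) auto

lemma card2_nonneg: "is_metric V w \<Longrightarrow> card e = 2 \<Longrightarrow> e \<subseteq> V \<Longrightarrow> 0 \<le> ew w e"
proof -
  assume m: "is_metric V w" and c: "card e = 2" and s: "e \<subseteq> V"
  obtain a b where ab: "e = {a, b}" "a \<noteq> b" using c by (auto simp: card_2_iff)
  show ?thesis using ew_nonneg_pair[OF m, of a b] ab s by simp
qed

lemma walk_in:
  assumes "\<forall>f\<in>T. f \<in># ec W' + R" "\<forall>e\<in>#R. e \<inter> set W' = {}"
  shows "ys \<noteq> [] \<Longrightarrow> pe ys \<subseteq> T \<Longrightarrow> hd ys \<in> set W' \<Longrightarrow> set ys \<subseteq> set W'"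
proof (induction ys rule: pe.induct)
  case (1 y z zs)
  have yzT: "{y, z} \<in> T" using 1(3) by simp
  have y: "y \<in> set W'" using 1(4) by simp
  have "{y, z} \<in># ec W' + R" using bspec[OF assms(1) yzT] .
  moreover have "{y, z} \<notin># R"
  proof (rule notI)
    assume "{y, z} \<in># R"
    then have e: "{y, z} \<inter> set W' = {}" by (rule bspec[OF assms(2)])
    have "y \<in> {y, z} \<inter> set W'" using y by simp
    then show False unfolding e by simp
  qed
  ultimately have "{y, z} \<in># ec W'" by simp
  then have z: "z \<in> set W'" using ec_subset_set[of "{y,z}" W'] by blast
  have "set (z # zs) \<subseteq> set W'" using 1(1) 1(3) z by simp
  then show ?case using y by simp
qed auto

lemma euler_tsp:
  assumes finV: "finite V" and c3: "card V \<ge> 3" and met: "is_metric V w" and tree: "is_tree V T"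
    and gM: "good M" and MV: "\<forall>e\<in>#M. e \<subseteq> V" and evM: "\<forall>x. even (deg x M)" and TM: "\<forall>f\<in>T. f \<in># M"
  shows "TSP V w \<le> wm w M"
proof -
  obtain r where r: "r \<in> V" using c3 by fastforce
  have rne: "[r] \<noteq> []" by simp
  obtain W' R where H: "ec W' + R = ec [r] + M" "R \<subseteq># M" "set [r] \<subseteq> set W'"
     "set W' \<subseteq> set [r] \<union> \<Union>(set_mset M)" "\<forall>e\<in>#R. e \<inter> set W' = {}" "W' \<noteq> []"
    using H[OF gM evM rne] by (elim exE conjE) (rule that)
  have ecr: "ec [r] = {#{r}#}" by (simp add: ec_def)
  have T1: "\<forall>f\<in>T. f \<in># ec W' + R" using TM H(1) by simp
  have "V \<subseteq> set W'"
  proof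
    fix u assume u: "u \<in> V"
    obtain xs where "is_path T r u xs" using tree r u unfolding is_tree_def by blast
    then have xs: "xs \<noteq> []" "hd xs = r" "last xs = u" "pe xs \<subseteq> T" unfolding is_path_pe by auto
    have "set xs \<subseteq> set W'" using walk_in[OF T1 H(5) xs(1) xs(4)] xs(2) H(3) by simp
    moreover have "last xs \<in> set xs" using xs(1) by (rule last_in_set)
    ultimately show "u \<in> set W'" using xs(3) by blast
  qed
  moreover have "set W' \<subseteq> V"
  proof
    fix z assume "z \<in> set W'"
    then have "z \<in> set [r] \<union> \<Union>(set_mset M)" using H(4) by (rule subsetD[rotated])
    then consider "z = r" | "\<exists>e\<in>set_mset M. z \<in> e" by auto
    then show "z \<in> V"
    proof cases
      case 1 then show ?thesis using r by simp
    next
      case 2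
      then obtain e where e: "e \<in># M" "z \<in> e" by auto
      have "e \<subseteq> V" using MV e(1) by (rule bspec)
      then show ?thesis using e(2) by (rule subsetD)
    qed
  qed
  ultimately have setW: "set W' = V" by blast
  have "TSP V w \<le> wm w (ec W')" using TSP_le_walk[OF finV c3 met setW] .
  moreover have "wm w (ec W') + wm w R = wm w M"
  proof -
    have "wm w (ec W') + wm w R = wm w (ec [r]) + wm w M" using arg_cong[OF H(1), of "wm w"] by simp
    moreover have "ew w {r} = 0"
    proof -
      have "ew w {r, r} = w r r" using ew_pair[OF met r r] .
      moreover have "w r r = 0" using met r unfolding is_metric_def by blast
      ultimately show ?thesis by simp
    qed
    ultimately show ?thesis using ecr by simp
  qed
  moreover have "0 \<le> wm w R"
  proof (rule wm_nonneg, rule ballI)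
    fix e assume "e \<in># R"
    have eM: "e \<in># M" using H(2) \<open>e \<in># R\<close> by (rule mset_subset_eqD)
    have c2: "card e = 2" using gM unfolding good_def using eM by (rule bspec)
    have eV: "e \<subseteq> V" using MV eM by (rule bspec)
    show "0 \<le> ew w e" using card2_nonneg[OF met c2 eV] .
  qed
  ultimately show ?thesis by linarith
qed


lemma deg_mset_set: "finite S \<Longrightarrow> deg x (mset_set S) = card {e\<in>S. x \<in> e}"
  unfolding deg_def by (simp add: filter_mset_mset_set size_mset_set)

lemma wm_mset_set: "wm w (mset_set S) = wt w S"
  unfolding wm_def wt_def by (rule sum_unfold_sum_mset[symmetric])

lemma pairsE: "e \<in> pairs V \<Longrightarrow> \<exists>a b. e = {a, b} \<and> a \<in> V \<and> b \<in> V \<and> a \<noteq> b"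
  unfolding pairs_def by blast

lemma pairs_card: "e \<in> pairs V \<Longrightarrow> card e = 2"
  using pairsE[of e V] by auto

lemma pairs_sub: "e \<in> pairs V \<Longrightarrow> e \<subseteq> V"
  using pairsE[of e V] by auto

lemma finite_pairs: "finite V \<Longrightarrow> finite (pairs V)"
proof -
  assume "finite V"
  moreover have "pairs V \<subseteq> Pow V" unfolding pairs_def by blast
  ultimately show ?thesis by (meson finite_Pow_iff finite_subset)
qed

lemma pairs_nonneg: "is_metric V w \<Longrightarrow> e \<in> pairs V \<Longrightarrow> 0 \<le> ew w e"
  using pairsE[of e V] ew_nonneg_pair by metis

lemma sum_Un_le:
  fixes f :: "'b \<Rightarrow> real"
  assumes "finite A" "finite B" "\<forall>x\<in>A \<inter> B. 0 \<le> f x"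
  shows "sum f (A \<union> B) \<le> sum f A + sum f B"
proof -
  have "sum f (A \<union> B) = sum f A + sum f B - sum f (A \<inter> B)" using sum_Un[OF assms(1,2)] .
  moreover have "0 \<le> sum f (A \<inter> B)" using assms(3) by (intro sum_nonneg) auto
  ultimately show ?thesis by linarith
qed

lemma sum_UN_le:
  fixes f :: "'b \<Rightarrow> real"
  assumes "finite I" "\<forall>i\<in>I. finite (A i)" "\<forall>x\<in>\<Union>(A ` I). 0 \<le> f x"
  shows "sum f (\<Union>(A ` I)) \<le> (\<Sum>i\<in>I. sum f (A i))"
  using assms
proof (induction I rule: finite_induct)
  case empty then show ?case by simp
next
  case (insert i I)
  have "sum f (\<Union>(A ` insert i I)) = sum f (A i \<union> \<Union>(A ` I))" by simp
  also have "\<dots> \<le> sum f (A i) + sum f (\<Union>(A ` I))"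
    using insert by (intro sum_Un_le) auto
  also have "sum f (\<Union>(A ` I)) \<le> (\<Sum>i\<in>I. sum f (A i))" using insert by auto
  finally show ?case using insert by simp
qed

lemma path_cov_parity:
  assumes acyc: "\<not> (\<exists>c. is_cycle T c)" and conn: "\<forall>u\<in>V. \<forall>v\<in>V. \<exists>xs. is_path T u v xs"
    and e: "e \<in> pairs V"
  shows "even (card {f\<in>cov T e. x \<in> f} + (if x \<in> e then 1 else 0))"
proof -
  obtain a b where ab: "e = {a, b}" "a \<in> V" "b \<in> V" "a \<noteq> b" using pairsE[OF e] by blast
  obtain xs where xs: "is_path T a b xs" using conn ab by blast
  have cov: "cov T e = pe xs" unfolding ab(1) by (rule cov_eq[OF acyc xs])
  have p: "xs \<noteq> []" "hd xs = a" "last xs = b" "distinct xs" using xs unfolding is_path_pe by auto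
  have "card {f \<in> pe xs. x \<in> f} + (if x = hd xs then 1 else 0) + (if x = last xs then 1 else 0)
     = (if x \<in> set xs then 2 else 0)" using path_deg[OF p(4) p(1)] .
  moreover have "(if x = hd xs then 1 else 0) + (if x = last xs then 1 else 0) = (if x \<in> e then 1 else (0::nat))"
    using p(2,3) ab by auto
  ultimately show ?thesis unfolding cov by (auto split: if_splits)
qed


lemma final_arith:
  fixes x t s u v :: real
  assumes "s \<le> u - v" "x \<le> 2 * t + (v - u) / 2"
  shows "x \<le> 2 * t - s / 2"
proof -
  have "s / 2 \<le> (u - v) / 2" using assms(1) by simp
  then show ?thesis using assms(2) by (simp add: field_simps)
qed

theorem mainTheorem1:
  fixes V :: "'a set" and w :: "'a \<Rightarrow> 'a \<Rightarrow> real" and T :: "'a set set"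
    and \<T> :: "('a set \<times> 'a set set) set"
  assumes "finite V" and "card V \<ge> 3"
    and "is_metric V w"
    and "is_mst V w T"
    and "\<forall>S\<in>\<T>. is_subtree V T S"
    and "\<forall>S1\<in>\<T>. \<forall>S2\<in>\<T>. S1 \<noteq> S2 \<longrightarrow> snd S1 \<inter> snd S2 = {}"
  shows "TSP V w \<le> 2 * MST V w - (1/2) * (\<Sum>S\<in>\<T>. opt_adv V w T S)"
proof -
  note finV = assms(1) and c3 = assms(2) and met = assms(3)
  have tree: "is_tree V T" and wT: "wt w T = MST V w"
    using assms(4) unfolding is_mst_def spanning_tree_def by auto
  have TP: "T \<subseteq> pairs V" and acyc: "\<not> (\<exists>c. is_cycle T c)"
    and conn: "\<forall>u\<in>V. \<forall>v\<in>V. \<exists>xs. is_path T u v xs"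
    using tree unfolding is_tree_def by auto
  have finP: "finite (pairs V)" using finV by (rule finite_pairs)
  have finT: "finite T" using finP TP by (rule finite_subset[rotated])
  have nnP: "\<And>e. e \<in> pairs V \<Longrightarrow> 0 \<le> ew w e" using pairs_nonneg[OF met] by blast
  have exE: "\<forall>S\<in>\<T>. \<exists>E'. E' \<subseteq> pairs V \<and> opt_adv V w T S = adv w T E' S"
  proof
    fix S assume "S \<in> \<T>"
    let ?F = "{adv w T E' S | E'. E' \<subseteq> pairs V \<and> (\<forall>e\<in>E'. e \<inter> fst S \<noteq> {})}"
    have "?F \<subseteq> (\<lambda>E'. adv w T E' S) ` Pow (pairs V)" by blast
    moreover have "finite ((\<lambda>E'. adv w T E' S) ` Pow (pairs V))" using finP by simp
    ultimately have finF: "finite ?F" by (rule finite_subset)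
    have "adv w T {} S \<in> ?F" by blast
    then have neF: "?F \<noteq> {}" by blast
    have "Max ?F \<in> ?F" using finF neF by (rule Max_in)
    then obtain E' where "E' \<subseteq> pairs V" "Max ?F = adv w T E' S" by blast
    then show "\<exists>E'. E' \<subseteq> pairs V \<and> opt_adv V w T S = adv w T E' S" unfolding opt_adv_def by blast
  qed
  then obtain Ef where Ef: "\<forall>S\<in>\<T>. Ef S \<subseteq> pairs V \<and> opt_adv V w T S = adv w T (Ef S) S"
    by (rule bchoice[elim_format]) blast
  define E where "E = \<Union>(Ef ` \<T>)"
  have EP: "E \<subseteq> pairs V" unfolding E_def using Ef by blast
  have finE: "finite E" using finP EP by (rule finite_subset[rotated])
  have finTT: "finite \<T>"
  proof -
    have "\<T> \<subseteq> Pow V \<times> Pow T"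
    proof
      fix S assume "S \<in> \<T>"
      then have "is_subtree V T S" using assms(5) by blast
      then have "fst S \<subseteq> V" "snd S \<subseteq> T" unfolding is_subtree_def by auto
      then show "S \<in> Pow V \<times> Pow T" by (cases S) auto
    qed
    moreover have "finite (Pow V \<times> Pow T)" using finV finT by simp
    ultimately show ?thesis by (rule finite_subset)
  qed
  let ?c = "ew w"
  let ?U = "\<Union>e\<in>E. cov T e"
  have cvsub: "\<forall>e\<in>E. cov T e \<subseteq> T" using cov_sub by blast
  obtain R where R: "R \<subseteq> E" "sum ?c R - sum ?c (Dset T (cov T) R) \<le> (sum ?c E - sum ?c ?U) / 2"
    using exists_good_R[OF finT finE cvsub, of ?c] by blast
  let ?D = "Dset T (cov T) R"
  have DT: "?D \<subseteq> T" unfolding Dset_def by blast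
  have RP: "R \<subseteq> pairs V" using R(1) EP by blast
  have finR: "finite R" using finE R(1) by (rule finite_subset[rotated])
  define M where "M = mset_set T + mset_set (T - ?D) + mset_set R"
  have finTD: "finite (T - ?D)" using finT by simp
  have inM: "\<And>e. e \<in># M \<Longrightarrow> e \<in> pairs V"
  proof -
    fix e assume "e \<in># M"
    then have "e \<in> T \<or> e \<in> T - ?D \<or> e \<in> R" unfolding M_def using finT finTD finR by auto
    then show "e \<in> pairs V" using TP RP by blast
  qed
  have gM: "good M" unfolding good_def using inM pairs_card by blast
  have MV: "\<forall>e\<in>#M. e \<subseteq> V" using inM pairs_sub by blast
  have TM: "\<forall>f\<in>T. f \<in># M" unfolding M_def using finT by simp
  have evM: "\<forall>x. even (deg x M)"
  proof
    fix x
    let ?cT = "card {e\<in>T. x \<in> e}"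
    let ?cD = "card {e\<in>?D. x \<in> e}"
    let ?cR = "card {e\<in>R. x \<in> e}"
    have d1: "deg x M = ?cT + card {e\<in>T - ?D. x \<in> e} + ?cR"
      unfolding M_def using finT finTD finR by (simp add: deg_mset_set)
    have "{e\<in>T - ?D. x \<in> e} = {e\<in>T. x \<in> e} - {e\<in>?D. x \<in> e}" by blast
    moreover have "{e\<in>?D. x \<in> e} \<subseteq> {e\<in>T. x \<in> e}" using DT by blast
    moreover have "finite {e\<in>?D. x \<in> e}"
    proof -
      have "finite ?D" using finT DT by (rule finite_subset[rotated])
      then show ?thesis by simp
    qed
    ultimately have d2: "card {e\<in>T - ?D. x \<in> e} = ?cT - ?cD" by (simp add: card_Diff_subset)
    have le: "?cD \<le> ?cT" using finT DT by (intro card_mono) auto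
    have pev: "\<forall>e\<in>R. even (card {f\<in>cov T e. x \<in> f} + (if x \<in> e then 1 else 0))"
      using path_cov_parity[OF acyc conn] RP by blast
    have covs: "\<forall>e\<in>R. cov T e \<subseteq> T" using cov_sub by blast
    have ev: "even (?cD + ?cR)" using parity_D[OF finT finR covs pev] .
    have ar: "\<And>a b c d::nat. even (b + c) \<Longrightarrow> d = a + (a - b) + c \<Longrightarrow> b \<le> a \<Longrightarrow> even d"
      by presburger
    have d3: "deg x M = ?cT + (?cT - ?cD) + ?cR" using d1 d2 by simp
    show "even (deg x M)" by (rule ar[OF ev d3 le])
  qed
  have tsp: "TSP V w \<le> wm w M" by (rule euler_tsp[OF finV c3 met tree gM MV evM TM])
  have wM: "wm w M = wt w T + wt w (T - ?D) + wt w R" unfolding M_def by (simp add: wm_mset_set)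
  have wTD: "wt w (T - ?D) = wt w T - wt w ?D" unfolding wt_def using finT DT by (simp add: sum_diff)
  have key: "TSP V w \<le> 2 * wt w T + (sum ?c E - sum ?c ?U) / 2"
    using tsp wM wTD R(2) unfolding wt_def by linarith
  define A where "A S = covs T (Ef S) \<inter> snd S" for S
  have adv_eq: "(\<Sum>S\<in>\<T>. opt_adv V w T S) = (\<Sum>S\<in>\<T>. sum ?c (A S)) - (\<Sum>S\<in>\<T>. sum ?c (Ef S))"
  proof -
    have "(\<Sum>S\<in>\<T>. opt_adv V w T S) = (\<Sum>S\<in>\<T>. sum ?c (A S) - sum ?c (Ef S))"
      using Ef unfolding adv_def A_def wt_def by (intro sum.cong) auto
    then show ?thesis by (simp add: sum_subtractf)
  qed
  have AU: "\<forall>S\<in>\<T>. A S \<subseteq> ?U"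
    unfolding A_def covs_def E_def by blast
  have UT: "?U \<subseteq> T" using cvsub by blast
  have finU: "finite ?U" using UT finT by (rule finite_subset)
  have finA: "\<forall>S\<in>\<T>. finite (A S)" using AU finU finite_subset by blast
  have disjA: "\<forall>S1\<in>\<T>. \<forall>S2\<in>\<T>. S1 \<noteq> S2 \<longrightarrow> A S1 \<inter> A S2 = {}"
    using assms(6) unfolding A_def by blast
  have s1: "(\<Sum>S\<in>\<T>. sum ?c (A S)) = sum ?c (\<Union>(A ` \<T>))"
    using sum.UNION_disjoint[OF finTT finA disjA, of ?c] by (rule sym)
  have s2: "sum ?c (\<Union>(A ` \<T>)) \<le> sum ?c ?U"
  proof (rule sum_mono2)
    show "finite ?U" using UT finT by (rule finite_subset)
    show "\<Union>(A ` \<T>) \<subseteq> ?U" using AU by blast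
    show "\<And>b. b \<in> ?U - \<Union>(A ` \<T>) \<Longrightarrow> 0 \<le> ?c b" using UT TP nnP by blast
  qed
  have s3: "sum ?c E \<le> (\<Sum>S\<in>\<T>. sum ?c (Ef S))"
    unfolding E_def
  proof (rule sum_UN_le[OF finTT])
    show "\<forall>i\<in>\<T>. finite (Ef i)" using Ef finP finite_subset by blast
    show "\<forall>x\<in>\<Union>(Ef ` \<T>). 0 \<le> ?c x" using Ef nnP by blast
  qed
  have fin: "(\<Sum>S\<in>\<T>. opt_adv V w T S) \<le> sum ?c ?U - sum ?c E" using adv_eq s1 s2 s3 by linarith
  have half: "1/2 * (\<Sum>S\<in>\<T>. opt_adv V w T S) = (\<Sum>S\<in>\<T>. opt_adv V w T S) / 2" by simp
  show ?thesis unfolding half wT[symmetric] by (rule final_arith[OF fin key])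
qed


end
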